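(* Let $n\ge 2$, $s\in D^n$, and let $f\in\mathrm{Ann}(s^{(n-1)})$ be nonzero with $\Delta(f,s)\neq 0$. Then: (i) every nonzero $g\in\mathrm{Ann}(s)$ satisfies $\deg g\ge n-\deg f$; (ii) if moreover $f\in\mathrm{Min}(s^{(n-1)})$, then every nonzero $g\in\mathrm{Ann}(s)$ satisfies $\deg g\ge \max\{e_{n-1}(f),0\}+\deg f=\max\{n-\deg f,\deg f\}$, where $e_{n-1}(f)=n-2\deg f$. In particular $L(s)\ge\max\{n-\deg f,\deg f\}$.
   Context: Let $D$ be a commutative integral domain with $1\neq 0$. For $s=(s_1,\dots,s_n)\in D^n$ put $\underline{s}=s_1x^{-1}+\cdots+s_nx^{-n}$, an element of the Laurent polynomial ring $D[x,x^{-1}]$; for a Laurent polynomial $F$, $F_k$ denotes the coefficient of $x^k$. For $1\le i\le n$, $s^{(i)}=(s_1,\dots,s_i)$. A polynomial $f\in D[x]$ is an annihilator of $s$, written $f\in\mathrm{Ann}(s)$, if $f=0$, or $d=\deg f\ge 0$ and $(f\cdot\underline{s})_{d-j}=0$ for all $j$ with $d+1\le j\le n$ (equivalently $\sum_{k=0}^{d}f_ks_{j-d+k}=0$ for $d+1\le j\le n$). $\mathrm{Min}(s)$ is the set of nonzero annihilators of $s$ of least degree, and the linear complexity $L(s)$ is that least degree. For nonzero $f\in D[x]$, the discrepancy is $\Delta(f,s)=(f\cdot\underline{s})_{\deg f-n}=\sum_{k=0}^{\deg f}f_ks_{n-\deg f+k}$. *)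

theory Defs
  imports "HOL-Computational_Algebra.Polynomial"
begin

text \<open>A sequence s = (s_1,...,s_n) over an integral domain is a list of length n;
  s_j is the j-th entry (1-based). Entries outside 1..n are 0 (coefficients of the
  Laurent polynomial underline-s).\<close>

definition sterm :: "'a::idom list \<Rightarrow> int \<Rightarrow> 'a" where
  "sterm s j = (if 1 \<le> j \<and> j \<le> int (length s) then s ! (nat j - 1) else 0)"

text \<open>Prefix s^(i) = take i s.\<close>

definition Ann :: "'a::idom list \<Rightarrow> 'a poly set" where
  "Ann s = {f. f = 0 \<or>
     (\<forall>j::int. int (degree f) + 1 \<le> j \<and> j \<le> int (length s) \<longrightarrow>
        (\<Sum>k=0..degree f. coeff f k * sterm s (j - int (degree f) + int k)) = 0)}"

definition LC :: "'a::idom list \<Rightarrow> nat" where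
  "LC s = (LEAST d. \<exists>g. g \<noteq> 0 \<and> g \<in> Ann s \<and> degree g = d)"

definition Min_ann :: "'a::idom list \<Rightarrow> 'a poly set" where
  "Min_ann s = {f. f \<noteq> 0 \<and> f \<in> Ann s \<and> degree f = LC s}"

definition discrepancy :: "'a::idom poly \<Rightarrow> 'a list \<Rightarrow> 'a" where
  "discrepancy f s = (\<Sum>k=0..degree f. coeff f k * sterm s (int (length s) - int (degree f) + int k))"

end

theory Submission
  imports Defs
begin

lemma sterm_take:
  assumes "i \<le> int m" "m \<le> length s"
  shows "sterm (take m s) i = sterm s i"
  using assms by (auto simp: sterm_def min_def)

lemma Ann_take:
  assumes "g \<in> Ann s" "m \<le> length s"
  shows "g \<in> Ann (take m s)"
proof -
  { assume g: "g \<noteq> 0"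
    have "\<forall>j::int. int (degree g) + 1 \<le> j \<and> j \<le> int (length (take m s)) \<longrightarrow>
        (\<Sum>k=0..degree g. coeff g k * sterm (take m s) (j - int (degree g) + int k)) = 0"
    proof (intro allI impI)
      fix j :: int assume j: "int (degree g) + 1 \<le> j \<and> j \<le> int (length (take m s))"
      have "(\<Sum>k=0..degree g. coeff g k * sterm (take m s) (j - int (degree g) + int k))
          = (\<Sum>k=0..degree g. coeff g k * sterm s (j - int (degree g) + int k))"
        using j assms(2) by (intro sum.cong refl) (subst sterm_take, auto)
      also have "\<dots> = 0" using assms(1) g j by (auto simp: Ann_def)
      finally show "(\<Sum>k=0..degree g. coeff g k * sterm (take m s) (j - int (degree g) + int k)) = 0" .
    qed }
  then show ?thesis by (auto simp: Ann_def)
qed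

lemma part1:
  fixes s :: "'a::idom list" and f g :: "'a poly"
  assumes n: "length s \<ge> 2"
    and fA: "f \<in> Ann (take (length s - 1) s)" and f0: "f \<noteq> 0"
    and disc: "discrepancy f s \<noteq> 0"
    and g0: "g \<noteq> 0" and gA: "g \<in> Ann s"
  shows "int (degree g) \<ge> int (length s) - int (degree f)"
proof (rule ccontr)
  assume NT: "\<not> ?thesis"
  define n where "n = length s"
  define d where "d = degree f"
  define e where "e = degree g"
  have lt: "int e < int n - int d" using NT by (simp add: n_def d_def e_def)
  define S where "S = (\<Sum>k=0..d. \<Sum>l=0..e. coeff f k * coeff g l * sterm s (int n - int d - int e + int k + int l))"
  have "S = (\<Sum>k=0..d. coeff f k * (\<Sum>l=0..e. coeff g l * sterm s ((int n - int d + int k) - int e + int l)))"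
    unfolding S_def by (simp add: sum_distrib_left algebra_simps)
  also have "\<dots> = 0"
  proof (intro sum.neutral ballI)
    fix k assume k: "k \<in> {0..d}"
    have "(\<Sum>l=0..e. coeff g l * sterm s ((int n - int d + int k) - int e + int l)) = 0"
      using gA g0 k lt unfolding Ann_def e_def n_def by auto
    then show "coeff f k * (\<Sum>l=0..e. coeff g l * sterm s ((int n - int d + int k) - int e + int l)) = 0"
      by simp
  qed
  finally have S0: "S = 0" .
  define T where "T = (\<lambda>l. (\<Sum>k=0..d. coeff f k * sterm s ((int n - int e + int l) - int d + int k)))"
  have "S = (\<Sum>l=0..e. coeff g l * T l)"
    unfolding S_def T_def by (subst sum.swap) (simp add: sum_distrib_left algebra_simps)
  also have "\<dots> = coeff g e * T e + (\<Sum>l\<in>{0..<e}. coeff g l * T l)"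
  proof -
    have "{0..e} = insert e {0..<e}" by auto
    then show ?thesis by simp
  qed
  also have "(\<Sum>l\<in>{0..<e}. coeff g l * T l) = 0"
  proof (intro sum.neutral ballI)
    fix l assume l: "l \<in> {0..<e}"
    have "T l = (\<Sum>k=0..d. coeff f k * sterm (take (n - 1) s) ((int n - int e + int l) - int d + int k))"
      unfolding T_def using l n by (intro sum.cong refl) (subst sterm_take, auto simp: n_def)
    also have "\<dots> = 0"
      using fA f0 l lt n unfolding Ann_def d_def n_def by auto
    finally show "coeff g l * T l = 0" by simp
  qed
  also have "T e = discrepancy f s"
    unfolding T_def discrepancy_def d_def n_def by simp
  finally have "coeff g e * discrepancy f s = 0" using S0 by simp
  moreover have "coeff g e \<noteq> 0" using g0 by (simp add: e_def)
  ultimately show False using disc by simp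
qed

theorem mainTheorem2:
  fixes s :: "'a::idom list" and f :: "'a poly"
  assumes "length s \<ge> 2"
    and "f \<in> Ann (take (length s - 1) s)" and "f \<noteq> 0"
    and "discrepancy f s \<noteq> 0"
  shows "(\<forall>g. g \<noteq> 0 \<and> g \<in> Ann s \<longrightarrow>
            int (degree g) \<ge> int (length s) - int (degree f))
       \<and> (f \<in> Min_ann (take (length s - 1) s) \<longrightarrow>
            (\<forall>g. g \<noteq> 0 \<and> g \<in> Ann s \<longrightarrow>
               int (degree g) \<ge> max (int (length s) - 2 * int (degree f)) 0 + int (degree f))
          \<and> max (int (length s) - 2 * int (degree f)) 0 + int (degree f)
              = max (int (length s) - int (degree f)) (int (degree f))
          \<and> int (LC s) \<ge> max (int (length s) - int (degree f)) (int (degree f)))"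
proof -
  have P1: "\<forall>g. g \<noteq> 0 \<and> g \<in> Ann s \<longrightarrow> int (degree g) \<ge> int (length s) - int (degree f)"
    using part1[OF assms] by blast
  have P2: "int (degree g) \<ge> max (int (length s) - int (degree f)) (int (degree f))"
    if M: "f \<in> Min_ann (take (length s - 1) s)" and g: "g \<noteq> 0" "g \<in> Ann s" for g
  proof -
    have "g \<in> Ann (take (length s - 1) s)" using Ann_take[OF g(2)] by simp
    then have "LC (take (length s - 1) s) \<le> degree g"
      unfolding LC_def using g by (intro Least_le) auto
    then have "degree f \<le> degree g" using M by (simp add: Min_ann_def)
    then show ?thesis using P1 g by auto
  qed
  have ex: "\<exists>d g. g \<noteq> 0 \<and> g \<in> Ann s \<and> degree g = d"
    by (rule exI[of _ "length s"], rule exI[of _ "monom 1 (length s)"]) (auto simp: Ann_def degree_monom_eq)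
  show ?thesis
  proof (intro conjI impI P1)
    assume M: "f \<in> Min_ann (take (length s - 1) s)"
    show "\<forall>g. g \<noteq> 0 \<and> g \<in> Ann s \<longrightarrow>
               int (degree g) \<ge> max (int (length s) - 2 * int (degree f)) 0 + int (degree f)"
      using P2[OF M] by fastforce
    show "max (int (length s) - 2 * int (degree f)) 0 + int (degree f)
              = max (int (length s) - int (degree f)) (int (degree f))" by auto
    obtain g where "g \<noteq> 0 \<and> g \<in> Ann s \<and> degree g = LC s"
      unfolding LC_def using LeastI_ex[of "\<lambda>d. \<exists>g. g \<noteq> 0 \<and> g \<in> Ann s \<and> degree g = d", OF ex] by blast
    then show "int (LC s) \<ge> max (int (length s) - int (degree f)) (int (degree f))"
      using P2[OF M, of g] by auto
  qed
qed

end
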